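(* Let $d > 0$ and let $$S_d^* \in \arg\max_{S \subseteq V:\ |S| \le k,\ \mathrm{div}(S) \ge d} g(S)$$ (assume this feasible family is nonempty). Let $T$ be an output of $\mathrm{GreedyIndependentSet}(V,g,d',k)$ with $0 \le d' < d/2$. Then $g(T) \ge \tfrac{1}{2}\, g(S_d^* )$.
   Context: Let $V$ be a finite set of $n$ points in a metric space with metric $\mathrm{dist}$, and let $d_{\max} = \max_{u,v \in V}\mathrm{dist}(u,v)$. For $u \in V$ and $S \subseteq V$ let $\mathrm{dist}(u,S) = \min_{v \in S}\mathrm{dist}(u,v)$, with $\mathrm{dist}(u,\emptyset) = \infty$. The max-min diversity is $\mathrm{div}(S) = \min_{u,v \in S,\, u \ne v}\mathrm{dist}(u,v)$ if $|S| \ge 2$, and $\mathrm{div}(S) = d_{\max}$ if $|S| \le 1$. Let $g : 2^V \to \mathbb{R}_{\ge 0}$ be a nonnegative monotone submodular function and $k \ge 1$ an integer. $\mathrm{GreedyIndependentSet}(V,g,d,k)$: initialize $S \gets \emptyset$; for $i = 1,\dots,k$: let $C = \{v \in V\setminus S : \mathrm{dist}(v,S) \ge d\}$; if $C = \emptyset$ return $S$; otherwise pick $t \in \arg\max_{v \in C} \big(g(S\cup\{v\}) - g(S)\big)$ (ties broken arbitrarily) and set $S \gets S \cup\{t\}$. After the loop, return $S$. *)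

theory Defs
  imports "HOL-Library.Extended_Real"
begin

definition metric_on :: "'a set \<Rightarrow> ('a \<Rightarrow> 'a \<Rightarrow> real) \<Rightarrow> bool" where
  "metric_on V dst \<longleftrightarrow>
     (\<forall>u\<in>V. \<forall>v\<in>V. dst u v \<ge> 0) \<and>
     (\<forall>u\<in>V. \<forall>v\<in>V. dst u v = 0 \<longleftrightarrow> u = v) \<and>
     (\<forall>u\<in>V. \<forall>v\<in>V. dst u v = dst v u) \<and>
     (\<forall>u\<in>V. \<forall>v\<in>V. \<forall>w\<in>V. dst u w \<le> dst u v + dst v w)"

text \<open>dist(u,S) = min over S, with dist(u,{}) = infinity.\<close>
definition dist_set :: "('a \<Rightarrow> 'a \<Rightarrow> real) \<Rightarrow> 'a \<Rightarrow> 'a set \<Rightarrow> ereal" where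
  "dist_set dst u S = Inf ((\<lambda>v. ereal (dst u v)) ` S)"

definition dmax :: "'a set \<Rightarrow> ('a \<Rightarrow> 'a \<Rightarrow> real) \<Rightarrow> real" where
  "dmax V dst = Max {dst u v | u v. u \<in> V \<and> v \<in> V}"

definition diversity :: "'a set \<Rightarrow> ('a \<Rightarrow> 'a \<Rightarrow> real) \<Rightarrow> 'a set \<Rightarrow> real" where
  "diversity V dst S =
     (if card S \<ge> 2 then Min {dst u v | u v. u \<in> S \<and> v \<in> S \<and> u \<noteq> v}
      else dmax V dst)"

definition nonneg_set_fun :: "'a set \<Rightarrow> ('a set \<Rightarrow> real) \<Rightarrow> bool" where
  "nonneg_set_fun V g \<longleftrightarrow> (\<forall>S. S \<subseteq> V \<longrightarrow> g S \<ge> 0)"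

definition monotone_set_fun :: "'a set \<Rightarrow> ('a set \<Rightarrow> real) \<Rightarrow> bool" where
  "monotone_set_fun V g \<longleftrightarrow> (\<forall>A B. A \<subseteq> B \<and> B \<subseteq> V \<longrightarrow> g A \<le> g B)"

definition submodular :: "'a set \<Rightarrow> ('a set \<Rightarrow> real) \<Rightarrow> bool" where
  "submodular V g \<longleftrightarrow> (\<forall>A B x. A \<subseteq> B \<and> B \<subseteq> V \<and> x \<in> V - B \<longrightarrow>
      g (B \<union> {x}) - g B \<le> g (A \<union> {x}) - g A)"

definition cands :: "'a set \<Rightarrow> ('a \<Rightarrow> 'a \<Rightarrow> real) \<Rightarrow> real \<Rightarrow> 'a set \<Rightarrow> 'a set" where
  "cands V dst d S = {v \<in> V - S. dist_set dst v S \<ge> ereal d}"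

text \<open>greedy_reach ... i S: S is a possible value of the set after i iterations
  (all tie-breaking choices allowed).\<close>
inductive greedy_reach ::
  "'a set \<Rightarrow> ('a set \<Rightarrow> real) \<Rightarrow> ('a \<Rightarrow> 'a \<Rightarrow> real) \<Rightarrow> real \<Rightarrow> nat \<Rightarrow> nat \<Rightarrow> 'a set \<Rightarrow> bool"
  for V g dst d k where
  start: "greedy_reach V g dst d k 0 {}"
| step: "\<lbrakk> greedy_reach V g dst d k i S; i < k; t \<in> cands V dst d S;
           \<forall>v\<in>cands V dst d S. g (S \<union> {v}) - g S \<le> g (S \<union> {t}) - g S \<rbrakk>
         \<Longrightarrow> greedy_reach V g dst d k (Suc i) (S \<union> {t})"

text \<open>T is a possible output of GreedyIndependentSet(V,g,d,k): either the loop ran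
  all k iterations, or it returned early because the candidate set was empty.\<close>
definition greedy_output ::
  "'a set \<Rightarrow> ('a set \<Rightarrow> real) \<Rightarrow> ('a \<Rightarrow> 'a \<Rightarrow> real) \<Rightarrow> real \<Rightarrow> nat \<Rightarrow> 'a set \<Rightarrow> bool" where
  "greedy_output V g dst d k T \<longleftrightarrow>
     (\<exists>i. greedy_reach V g dst d k i T \<and> (i = k \<or> (i < k \<and> cands V dst d T = {})))"

end

theory Submission
  imports Defs
begin

lemma dist_set_insert:
  "dist_set dst v (S \<union> {t}) = min (ereal (dst v t)) (dist_set dst v S)"
  by (simp add: dist_set_def inf_min)

lemma cands_anti:
  assumes "x \<in> cands V dst d (S \<union> {t})" shows "x \<in> cands V dst d S"
proof -
  have le: "dist_set dst x (S \<union> {t}) \<le> dist_set dst x S" unfolding dist_set_insert by (rule min.cobounded2)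
  have "x \<in> V" "x \<notin> S" "ereal d \<le> dist_set dst x (S \<union> {t})" using assms unfolding cands_def by auto
  thus ?thesis using le order.trans unfolding cands_def by blast
qed

lemma inv:
  assumes "greedy_reach V g dst d' k i S" and "Sopt \<subseteq> V" and "finite V"
    and mono: "monotone_set_fun V g" and sub: "submodular V g"
    and pw: "\<forall>n1\<in>Sopt. \<forall>n2\<in>Sopt. \<forall>t\<in>V. n1 \<noteq> n2 \<longrightarrow> dst n1 t < d' \<longrightarrow> dst n2 t < d' \<longrightarrow> False"
  shows "S \<subseteq> V \<and> card (Sopt - S - cands V dst d' S) \<le> i \<and>
    (\<forall>U. U \<subseteq> (Sopt - S) \<inter> cands V dst d' S \<longrightarrow> card U + card (Sopt - S - cands V dst d' S) \<le> i \<longrightarrow>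
      (\<Sum>x\<in>Sopt - S - cands V dst d' S. g (S \<union> {x}) - g S) + (\<Sum>x\<in>U. g (S \<union> {x}) - g S) \<le> g S - g {})"
  using assms(1)
proof (induction rule: greedy_reach.induct)
  case start
  have "cands V dst d' {} = V" by (auto simp: cands_def dist_set_def)
  have e: "Sopt - V = {}" using assms(2) by auto
  have u: "\<And>U. U \<subseteq> Sopt \<Longrightarrow> card U = 0 \<Longrightarrow> U = {}"
  proof -
    fix U assume "U \<subseteq> Sopt" "card U = 0"
    moreover have "finite U" using \<open>U \<subseteq> Sopt\<close> assms(2,3) by (meson finite_subset)
    ultimately show "U = {}" by simp
  qed
  show ?case
  proof (simp add: e \<open>cands V dst d' {} = V\<close>, intro allI impI, elim conjE)
    fix U :: "'a set" assume "U \<subseteq> Sopt" "card U = 0"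
    hence "U = {}" using u by blast
    thus "(\<Sum>x\<in>U. g {x} - g {}) \<le> 0" by simp
  qed
next
  case (step i S t)
  define C where "C = cands V dst d' S"
  define C' where "C' = cands V dst d' (S \<union> {t})"
  define B where "B = Sopt - S - C"
  define B' where "B' = Sopt - (S \<union> {t}) - C'"
  define G where "G = g (S \<union> {t}) - g S"
  have finS: "finite Sopt" using assms(2,3) finite_subset by blast
  have SV: "S \<subseteq> V" using step.IH by blast
  have IH1: "card B \<le> i" using step.IH by (simp add: B_def C_def)
  have IH2: "\<And>U. U \<subseteq> (Sopt - S) \<inter> C \<Longrightarrow> card U + card B \<le> i \<Longrightarrow>
      (\<Sum>x\<in>B. g (S \<union> {x}) - g S) + (\<Sum>x\<in>U. g (S \<union> {x}) - g S) \<le> g S - g {}"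
    using step.IH by (simp add: B_def C_def)
  have tC: "t \<in> C" using step.hyps C_def by simp
  hence tV: "t \<in> V" "t \<notin> S" by (auto simp: C_def cands_def)
  have S'V: "S \<union> {t} \<subseteq> V" using SV tV by auto
  have Gmax: "\<And>x. x \<in> C \<Longrightarrow> g (S \<union> {x}) - g S \<le> G" using step.hyps C_def G_def by simp
  have G0: "G \<ge> 0" using mono[unfolded monotone_set_fun_def, rule_format, of S "S \<union> {t}"] S'V unfolding G_def by auto
  have subm: "\<And>x. x \<in> V - (S \<union> {t}) \<Longrightarrow> g (S \<union> {t} \<union> {x}) - g (S \<union> {t}) \<le> g (S \<union> {x}) - g S"
    using sub[unfolded submodular_def, rule_format, of S "S \<union> {t}"] S'V by auto
  have BB': "B \<subseteq> B'" using tC cands_anti[of _ V dst d' S t] by (auto simp: B_def B'_def C_def C'_def)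
  define N where "N = B' - B"
  have Nprop: "\<And>n. n \<in> N \<Longrightarrow> n \<in> C \<and> n \<in> Sopt \<and> dst n t < d'"
  proof -
    fix n assume "n \<in> N"
    hence n: "n \<in> Sopt" "n \<notin> S" "n \<noteq> t" "n \<notin> C'" "n \<notin> B" by (auto simp: N_def B'_def)
    hence nC: "n \<in> C" by (auto simp: B_def)
    hence "dist_set dst n S \<ge> ereal d'" by (simp add: C_def cands_def)
    moreover have "\<not> dist_set dst n (S \<union> {t}) \<ge> ereal d'" using n nC by (auto simp: C'_def C_def cands_def)
    moreover have "\<And>A B. A \<ge> ereal d' \<Longrightarrow> \<not> min B A \<ge> ereal d' \<Longrightarrow> B < ereal d'"
      by (auto simp: min_def split: if_splits)
    ultimately have "ereal (dst n t) < ereal d'" unfolding dist_set_insert by blast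
    hence "dst n t < d'" by simp
    thus "n \<in> C \<and> n \<in> Sopt \<and> dst n t < d'" using nC n by auto
  qed
  have finN: "finite N" using finS by (auto simp: N_def B'_def)
  have cN: "card N \<le> 1"
  proof (rule ccontr)
    assume "\<not> card N \<le> 1"
    then obtain a b where "a \<in> N" "b \<in> N" "a \<noteq> b"
      using finN card_le_Suc0_iff_eq[of N] by auto
    thus False using Nprop[of a] Nprop[of b] pw[rule_format, of a b t] tV by auto
  qed
  have B'eq: "B' = B \<union> N" using BB' N_def by auto
  have finB: "finite B" using finS by (auto simp: B_def)
  have BN: "B \<inter> N = {}" by (auto simp: N_def)
  have cB': "card B' = card B + card N" using B'eq finB finN BN card_Un_disjoint by metis
  have B'sub: "B' \<subseteq> V - (S \<union> {t})" using assms(2) by (auto simp: B'_def)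
  have part3: "\<forall>U. U \<subseteq> (Sopt - (S \<union> {t})) \<inter> C' \<longrightarrow> card U + card B' \<le> Suc i \<longrightarrow>
      (\<Sum>x\<in>B'. g (S \<union> {t} \<union> {x}) - g (S \<union> {t})) + (\<Sum>x\<in>U. g (S \<union> {t} \<union> {x}) - g (S \<union> {t})) \<le> g (S \<union> {t}) - g {}"
  proof (intro allI impI)
    fix U assume U: "U \<subseteq> (Sopt - (S \<union> {t})) \<inter> C'" and cU: "card U + card B' \<le> Suc i"
    have finU: "finite U" using U finS finite_subset by blast
    have UV: "U \<subseteq> V - (S \<union> {t})" using U assms(2) by auto
    have UC: "U \<subseteq> (Sopt - S) \<inter> C" using U cands_anti[of _ V dst d' S t] by (auto simp: C_def C'_def)
    have sU: "(\<Sum>x\<in>U. g (S \<union> {t} \<union> {x}) - g (S \<union> {t})) \<le> (\<Sum>x\<in>U. g (S \<union> {x}) - g S)"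
      using UV subm by (intro sum_mono) auto
    have sB: "(\<Sum>x\<in>B. g (S \<union> {t} \<union> {x}) - g (S \<union> {t})) \<le> (\<Sum>x\<in>B. g (S \<union> {x}) - g S)"
      using B'sub BB' subm by (intro sum_mono) auto
    have gS': "g (S \<union> {t}) = g S + G" by (simp add: G_def)
    show "(\<Sum>x\<in>B'. g (S \<union> {t} \<union> {x}) - g (S \<union> {t})) + (\<Sum>x\<in>U. g (S \<union> {t} \<union> {x}) - g (S \<union> {t})) \<le> g (S \<union> {t}) - g {}"
    proof (cases "N = {}")
      case True
      hence B'B: "B' = B" using B'eq by simp
      show ?thesis
      proof (cases "U = {}")
        case True
        have "(\<Sum>x\<in>B. g (S \<union> {x}) - g S) \<le> g S - g {}" using IH2[of "{}"] IH1 by simp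
        thus ?thesis using True B'B sB G0 gS' by simp
      next
        case False
        then obtain u where u: "u \<in> U" by blast
        define U0 where "U0 = U - {u}"
        have U0C: "U0 \<subseteq> (Sopt - S) \<inter> C" using UC by (auto simp: U0_def)
        have "card U0 + card B \<le> i" proof -
          have "card U > 0" using u finU card_gt_0_iff by blast
          thus ?thesis using cU B'B u finU by (simp add: U0_def)
        qed
        from IH2[OF U0C this] have ih: "(\<Sum>x\<in>B. g (S \<union> {x}) - g S) + (\<Sum>x\<in>U0. g (S \<union> {x}) - g S) \<le> g S - g {}" .
        have Ueq: "U = insert u U0" "u \<notin> U0" using u by (auto simp: U0_def)
        have s1: "(\<Sum>x\<in>U. g (S \<union> {t} \<union> {x}) - g (S \<union> {t})) = (g (S \<union> {t} \<union> {u}) - g (S \<union> {t})) + (\<Sum>x\<in>U0. g (S \<union> {t} \<union> {x}) - g (S \<union> {t}))"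
          unfolding U0_def by (rule sum.remove[OF finU u])
        have s2: "(\<Sum>x\<in>U0. g (S \<union> {t} \<union> {x}) - g (S \<union> {t})) \<le> (\<Sum>x\<in>U0. g (S \<union> {x}) - g S)"
          using UV subm by (intro sum_mono) (auto simp: U0_def)
        have "g (S \<union> {t} \<union> {u}) - g (S \<union> {t}) \<le> g (S \<union> {u}) - g S" using subm UV u by auto
        also have "\<dots> \<le> G" using Gmax UC u by auto
        finally show ?thesis unfolding B'B using s1 s2 ih sB gS' by linarith
      qed
    next
      case False
      then obtain n where Nn: "N = {n}" using cN finN
        by (metis card_0_eq card_1_singletonE le_SucE le_zero_eq One_nat_def)
      have B'i: "B' = insert n B" "n \<notin> B" using B'eq Nn BN by auto
      have "card U + card B \<le> i" using cU cB' Nn by simp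
      from IH2[OF UC this] have ih: "(\<Sum>x\<in>B. g (S \<union> {x}) - g S) + (\<Sum>x\<in>U. g (S \<union> {x}) - g S) \<le> g S - g {}" .
      have s1: "(\<Sum>x\<in>B'. g (S \<union> {t} \<union> {x}) - g (S \<union> {t})) = (g (S \<union> {t} \<union> {n}) - g (S \<union> {t})) + (\<Sum>x\<in>B. g (S \<union> {t} \<union> {x}) - g (S \<union> {t}))"
        using B'i finB by simp
      have nB': "n \<in> B'" using B'i by simp
      have "g (S \<union> {t} \<union> {n}) - g (S \<union> {t}) \<le> g (S \<union> {n}) - g S" using subm B'sub nB' by auto
      also have "\<dots> \<le> G" using Gmax Nprop[of n] Nn by auto
      finally show ?thesis using s1 sU ih sB gS' by linarith
    qed
  qed
  have "card B' \<le> Suc i" using cB' IH1 cN by simp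
  thus ?case using S'V part3 by (simp add: B'_def C'_def)
qed

lemma chain:
  assumes "finite Y" "Y \<subseteq> V - T" "T \<subseteq> V" "submodular V g"
  shows "g (T \<union> Y) \<le> g T + (\<Sum>x\<in>Y. g (T \<union> {x}) - g T)"
  using assms(1,2)
proof (induction Y rule: finite_induct)
  case empty then show ?case by simp
next
  case (insert y Y)
  have "g (T \<union> Y \<union> {y}) - g (T \<union> Y) \<le> g (T \<union> {y}) - g T"
    using assms(4)[unfolded submodular_def, rule_format, of T "T \<union> Y" y] assms(3) insert.prems insert.hyps by auto
  moreover have "T \<union> insert y Y = T \<union> Y \<union> {y}" by auto
  ultimately show ?case using insert by simp
qed

theorem lemma3p2:
  fixes V :: "'a set" and dst :: "'a \<Rightarrow> 'a \<Rightarrow> real" and g :: "'a set \<Rightarrow> real"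
    and k :: nat and d d' :: real and Sopt T :: "'a set"
  assumes "finite V"
    and "metric_on V dst"
    and "nonneg_set_fun V g" and "monotone_set_fun V g" and "submodular V g"
    and "k \<ge> 1"
    and "d > 0"
    and "Sopt \<subseteq> V" and "card Sopt \<le> k" and "diversity V dst Sopt \<ge> d"
    and "\<forall>S. S \<subseteq> V \<and> card S \<le> k \<and> diversity V dst S \<ge> d \<longrightarrow> g S \<le> g Sopt"
    and "0 \<le> d'" and "d' < d / 2"
    and "greedy_output V g dst d' k T"
  shows "g T \<ge> g Sopt / 2"
proof -
  have finS: "finite Sopt" using assms(1,8) finite_subset by blast
  have pw: "\<forall>n1\<in>Sopt. \<forall>n2\<in>Sopt. \<forall>t\<in>V. n1 \<noteq> n2 \<longrightarrow> dst n1 t < d' \<longrightarrow> dst n2 t < d' \<longrightarrow> False"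
  proof (intro ballI impI)
    fix n1 n2 t assume n: "n1 \<in> Sopt" "n2 \<in> Sopt" "t \<in> V" "n1 \<noteq> n2" "dst n1 t < d'" "dst n2 t < d'"
    have "card {n1, n2} \<le> card Sopt" using n finS by (intro card_mono) auto
    hence c2: "card Sopt \<ge> 2" using n by simp
    have fin: "finite {dst u v | u v. u \<in> Sopt \<and> v \<in> Sopt \<and> u \<noteq> v}"
    proof -
      have "{dst u v | u v. u \<in> Sopt \<and> v \<in> Sopt \<and> u \<noteq> v} \<subseteq> (\<lambda>(u,v). dst u v) ` (Sopt \<times> Sopt)" by auto
      thus ?thesis using finS finite_subset by blast
    qed
    have "d \<le> Min {dst u v | u v. u \<in> Sopt \<and> v \<in> Sopt \<and> u \<noteq> v}"
      using assms(10) c2 by (simp add: diversity_def)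
    also have "\<dots> \<le> dst n1 n2" using fin n by (intro Min_le) auto
    also have "\<dots> \<le> dst n1 t + dst t n2" using assms(2)[unfolded metric_on_def] n assms(8) by blast
    also have "dst t n2 = dst n2 t" using assms(2)[unfolded metric_on_def] n assms(8) by blast
    finally show False using n assms(13) by linarith
  qed
  from assms(14) obtain i where gr: "greedy_reach V g dst d' k i T"
    and ik: "i = k \<or> (i < k \<and> cands V dst d' T = {})" unfolding greedy_output_def by blast
  note I = inv[OF gr assms(8,1,4,5) pw]
  define C where "C = cands V dst d' T"
  define B where "B = Sopt - T - C"
  define U where "U = (Sopt - T) \<inter> C"
  have TV: "T \<subseteq> V" using I by blast
  have finB: "finite B" "finite U" using finS by (auto simp: B_def U_def)
  have Yeq: "Sopt - T = B \<union> U" "B \<inter> U = {}" by (auto simp: B_def U_def)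
  have cards: "card U + card B \<le> i"
  proof (cases "i = k")
    case True
    have "card U + card B = card (Sopt - T)" using Yeq finB card_Un_disjoint by (metis add.commute)
    also have "\<dots> \<le> card Sopt" using finS by (intro card_mono) auto
    finally show ?thesis using True assms(9) by simp
  next
    case False
    hence "C = {}" using ik C_def by simp
    hence "U = {}" by (simp add: U_def)
    thus ?thesis using I by (simp add: B_def C_def)
  qed
  have key: "(\<Sum>x\<in>B. g (T \<union> {x}) - g T) + (\<Sum>x\<in>U. g (T \<union> {x}) - g T) \<le> g T - g {}"
    using I cards by (simp add: B_def U_def C_def)
  have sumY: "(\<Sum>x\<in>Sopt - T. g (T \<union> {x}) - g T) = (\<Sum>x\<in>B. g (T \<union> {x}) - g T) + (\<Sum>x\<in>U. g (T \<union> {x}) - g T)"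
    using Yeq finB by (simp add: sum.union_disjoint)
  have "g Sopt \<le> g (T \<union> (Sopt - T))" using assms(4)[unfolded monotone_set_fun_def, rule_format, of Sopt "T \<union> (Sopt - T)"] assms(8) TV by auto
  also have "\<dots> \<le> g T + (\<Sum>x\<in>Sopt - T. g (T \<union> {x}) - g T)"
    using chain[of "Sopt - T" V T g] finS assms(8,5) TV by auto
  finally have "g Sopt \<le> g T + (g T - g {})" using sumY key by linarith
  moreover have "g {} \<ge> 0" using assms(3) unfolding nonneg_set_fun_def by auto
  ultimately show ?thesis by linarith
qed

end
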